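(* Let $B\in\mathbb{R}^{n\times n}$ be strictly diagonally row-dominant with positive diagonal entries and negative off-diagonal entries, $M=B^{-1}$, $P,R$ diagonal with strictly positive diagonal entries, $\beta>0$, and $w\in\mathbb{R}^n$. Assume (A1) $\displaystyle\max_i \frac{M_i w-1}{M_i\mathbf{1}} < \min_j \frac{M_j w+1}{M_j\mathbf{1}}$, and (A2) either $\mathrm{dz}(Mw)=0$, or the set $\mathcal{K}=\arg\max_i \left|\frac{\mathrm{dz}(M_i w)}{M_i\mathbf{1}}\right|$ is a singleton $\{k\}$. Then the closed-loop system $$\dot x=-x+B\,\mathrm{sat}(u)+w,\qquad \dot z=x+\beta\mathbf{1}\mathbf{1}^T\mathrm{dz}(u),\qquad u=-Px-Rz$$ has a unique equilibrium $(x^0,z^0)$, namely the one with $z^0=-R^{-1}(u^0+Px^0)$ and $$x^0=\mathbf{1}\,\frac{\mathrm{dz}(M_k w)}{M_k\mathbf{1}},\qquad u^0_k=-\mathrm{sat}(M_k w)-\frac{\mathrm{dz}(M_k w)}{\beta M_k\mathbf{1}},\qquad u^0_i=-M_i w+\frac{M_i\mathbf{1}}{M_k\mathbf{1}}\mathrm{dz}(M_k w)\ \ (i\neq k),$$ where $k\in\mathcal{K}$ (in the case $\mathrm{dz}(Mw)=0$ this gives $x^0=0$, $u^0=-Mw$ for any choice of $k$).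
   Context: $\mathbf{1}$ denotes the all-ones column vector in $\mathbb{R}^n$; $A_i$ denotes the $i$-th row of a matrix $A$. $\mathrm{sat}(v)=\max(\min(v,1),-1)$ and $\mathrm{dz}(v)=v-\mathrm{sat}(v)$, applied componentwise. An equilibrium is a pair $(x^0,z^0)$ with $u^0=-Px^0-Rz^0$ satisfying $0=-x^0+B\,\mathrm{sat}(u^0)+w$ and $0=x^0+\beta\mathbf{1}\mathbf{1}^T\mathrm{dz}(u^0)$. Under the hypotheses on $B$, $M=B^{-1}$ is entrywise nonnegative and $M_i\mathbf{1}>0$ for all $i$. *)

theory Defs
  imports "HOL-Analysis.Analysis"
begin

definition sat :: "real \<Rightarrow> real" where
  "sat v = max (min v 1) (-1)"

definition dz :: "real \<Rightarrow> real" where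
  "dz v = v - sat v"

definition satv :: "real ^ 'n \<Rightarrow> real ^ 'n" where
  "satv v = (\<chi> i. sat (v $ i))"

definition dzv :: "real ^ 'n \<Rightarrow> real ^ 'n" where
  "dzv v = (\<chi> i. dz (v $ i))"

definition ones :: "real ^ 'n" where
  "ones = (\<chi> i. 1)"

definition ones_mat :: "real ^ 'n ^ 'n" where
  "ones_mat = (\<chi> i j. 1)"

definition is_equilibrium ::
  "real^'n^'n \<Rightarrow> real^'n^'n \<Rightarrow> real^'n^'n \<Rightarrow> real \<Rightarrow> real^'n \<Rightarrow> real^'n \<Rightarrow> real^'n \<Rightarrow> bool" where
  "is_equilibrium B P R \<beta> w x z \<longleftrightarrow>
     (let u = - (P *v x) - (R *v z) in
        0 = - x + B *v satv u + w \<and>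
        0 = x + \<beta> *\<^sub>R (ones_mat *v dzv u))"

definition strictly_row_dominant :: "real^'n^'n \<Rightarrow> bool" where
  "strictly_row_dominant B \<longleftrightarrow>
     (\<forall>i. \<bar>B $ i $ i\<bar> > (\<Sum>j\<in>UNIV - {i}. \<bar>B $ i $ j\<bar>))"

end

theory Submission
  imports Defs
begin


lemma exists_max:
  fixes f :: "'n::finite \<Rightarrow> real"
  obtains i where "\<forall>j. f j \<le> f i"
proof -
  have "Max (range f) \<in> range f" by (intro Max_in) auto
  then obtain i where i: "Max (range f) = f i" by blast
  have "\<forall>j. f j \<le> Max (range f)" by (simp add: Max_ge)
  then show ?thesis using i that by auto
qed

lemma exists_min:
  fixes f :: "'n::finite \<Rightarrow> real"
  obtains i where "\<forall>j. f i \<le> f j"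
proof -
  obtain i where "\<forall>j. - f j \<le> - f i" using exists_max[of "\<lambda>j. - f j"] by blast
  then show ?thesis using that by auto
qed

lemma row_split:
  fixes A :: "real^'n^'n"
  shows "(A *v v) $ i = A$i$i * v$i + (\<Sum>j\<in>UNIV-{i}. A$i$j * v$j)"
  by (simp add: matrix_vector_mult_def sum.remove[of UNIV i])

lemma dom_ker:
  fixes A :: "real^'n^'n"
  assumes dom: "strictly_row_dominant A" and Av: "A *v v = 0"
  shows "v = 0"
proof (rule ccontr)
  assume "v \<noteq> 0"
  then obtain j0 where j0: "v$j0 \<noteq> 0" by (auto simp: vec_eq_iff)
  obtain i where imax: "\<forall>j. \<bar>v$j\<bar> \<le> \<bar>v$i\<bar>" using exists_max[of "\<lambda>j. \<bar>v$j\<bar>"] by blast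
  have vi: "\<bar>v$i\<bar> > 0" using imax[rule_format, of j0] j0 by auto
  have "0 = A$i$i * v$i + (\<Sum>j\<in>UNIV-{i}. A$i$j * v$j)"
    using row_split[of A v i] Av by simp
  then have "\<bar>A$i$i\<bar> * \<bar>v$i\<bar> = \<bar>\<Sum>j\<in>UNIV-{i}. A$i$j * v$j\<bar>"
    by (metis abs_minus_cancel abs_mult add_eq_0_iff)
  also have "\<dots> \<le> (\<Sum>j\<in>UNIV-{i}. \<bar>A$i$j * v$j\<bar>)" by (rule sum_abs)
  also have "\<dots> \<le> (\<Sum>j\<in>UNIV-{i}. \<bar>A$i$j\<bar> * \<bar>v$i\<bar>)"
    by (rule sum_mono) (simp add: abs_mult imax mult_left_mono)
  also have "\<dots> = (\<Sum>j\<in>UNIV-{i}. \<bar>A$i$j\<bar>) * \<bar>v$i\<bar>" by (simp add: sum_distrib_right)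
  also have "\<dots> < \<bar>A$i$i\<bar> * \<bar>v$i\<bar>"
    using dom vi unfolding strictly_row_dominant_def by (simp add: mult_strict_right_mono)
  finally show False by simp
qed

lemma dom_invertible:
  fixes A :: "real^'n^'n"
  assumes "strictly_row_dominant A" shows "invertible A"
  using dom_ker[OF assms] invertible_left_inverse matrix_left_invertible_ker by metis

lemma inv_props:
  fixes A :: "real^'n^'n"
  assumes "invertible A"
  shows "A ** matrix_inv A = mat 1 \<and> matrix_inv A ** A = mat 1"
  unfolding matrix_inv_def using assms unfolding invertible_def by (rule someI_ex)

lemma pos_sol:
  fixes A :: "real^'n^'n"
  assumes dom: "strictly_row_dominant A" and diag: "\<forall>i. A$i$i > 0"
    and off: "\<forall>i j. i \<noteq> j \<longrightarrow> A$i$j < 0" and Ay: "A *v y = ones"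
  shows "y $ l > 0"
proof -
  obtain i where imin: "\<forall>j. y$i \<le> y$j" using exists_min[of "\<lambda>j. y$j"] by blast
  have "y$i > 0"
  proof (rule ccontr)
    assume neg: "\<not> y$i > 0"
    have "1 = A$i$i * y$i + (\<Sum>j\<in>UNIV-{i}. A$i$j * y$j)"
      using row_split[of A y i] Ay by (simp add: ones_def)
    also have "\<dots> \<le> A$i$i * y$i + (\<Sum>j\<in>UNIV-{i}. A$i$j * y$i)"
      by (intro add_left_mono sum_mono) (simp add: imin off mult_left_mono_neg less_imp_le)
    also have "\<dots> = (A$i$i - (\<Sum>j\<in>UNIV-{i}. \<bar>A$i$j\<bar>)) * y$i"
    proof -
      have "(\<Sum>j\<in>UNIV-{i}. A$i$j) = - (\<Sum>j\<in>UNIV-{i}. \<bar>A$i$j\<bar>)"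
        by (simp add: sum_negf[symmetric] off) (rule sum.cong, auto simp: off less_imp_le)
      moreover have "(\<Sum>j\<in>UNIV-{i}. A$i$j * y$i) = (\<Sum>j\<in>UNIV-{i}. A$i$j) * y$i"
        by (simp add: sum_distrib_right)
      ultimately show ?thesis by (simp add: algebra_simps)
    qed
    also have "\<dots> \<le> 0"
    proof -
      have "A$i$i - (\<Sum>j\<in>UNIV-{i}. \<bar>A$i$j\<bar>) > 0"
        using dom diag unfolding strictly_row_dominant_def by (metis abs_of_pos diff_gt_0_iff_gt)
      then show ?thesis using neg by (simp add: mult_nonneg_nonpos)
    qed
    finally show False by simp
  qed
  then show ?thesis using imin by (meson less_le_trans)
qed



lemma core_unique:
  fixes L U d :: "'n::finite \<Rightarrow> real"
  assumes box: "\<forall>j. L j \<le> c \<and> c \<le> U j"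
    and dpos: "\<forall>j. d j > 0 \<longrightarrow> c = U j" and dneg: "\<forall>j. d j < 0 \<longrightarrow> c = L j"
    and A1: "\<forall>i j. L i < U j"
    and box0: "\<forall>j. L j \<le> c0 \<and> c0 \<le> U j"
    and sep: "\<forall>j. j \<noteq> k \<longrightarrow> (c0 < 0 \<longrightarrow> c0 < U j) \<and> (0 < c0 \<longrightarrow> L j < c0)"
    and ek: "(c0 < 0 \<longrightarrow> c0 = U k) \<and> (0 < c0 \<longrightarrow> c0 = L k)"
    and csum: "c = - \<beta> * sum d UNIV" and bp: "\<beta> > 0"
  shows "c = c0 \<and> (\<forall>j. d j = (if j = k then - c0 / \<beta> else 0))"
proof -
  have sp: "c < 0 \<Longrightarrow> \<exists>i. d i > 0"
  proof (rule ccontr)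
    assume "c < 0" "\<not> (\<exists>i. d i > 0)"
    then have "sum d UNIV \<le> 0" by (intro sum_nonpos) (auto simp: not_less)
    then have "\<beta> * sum d UNIV \<le> 0" using bp by (simp add: mult_nonneg_nonpos)
    then show False using \<open>c < 0\<close> csum by linarith
  qed
  have sn: "c > 0 \<Longrightarrow> \<exists>i. d i < 0"
  proof (rule ccontr)
    assume "c > 0" "\<not> (\<exists>i. d i < 0)"
    then have "sum d UNIV \<ge> 0" by (intro sum_nonneg) (auto simp: not_less)
    then have "\<beta> * sum d UNIV \<ge> 0" using bp by simp
    then show False using \<open>c > 0\<close> csum by linarith
  qed
  have cc: "c = c0"
  proof (rule ccontr)
    assume "c \<noteq> c0"
    then consider "c < c0" | "c > c0" by linarith
    then show False
    proof cases
      case 1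
      show False
      proof (cases "c0 \<le> 0")
        case True
        then have "c < 0" using 1 by linarith
        then obtain i where i: "d i > 0" using sp by blast
        then have "c = U i" using dpos by blast
        moreover have "c0 \<le> U i" using box0 by blast
        ultimately show False using 1 by linarith
      next
        case False
        then have "c0 = L k" using ek by auto
        moreover have "L k \<le> c" using box by blast
        ultimately show False using 1 by linarith
      qed
    next
      case 2
      show False
      proof (cases "c0 \<ge> 0")
        case True
        then have "c > 0" using 2 by linarith
        then obtain i where i: "d i < 0" using sn by blast
        then have "c = L i" using dneg by blast
        moreover have "L i \<le> c0" using box0 by blast
        ultimately show False using 2 by linarith
      next
        case False
        then have "c0 = U k" using ek by auto
        moreover have "c \<le> U k" using box by blast
        ultimately show False using 2 by linarith
      qed
    qed
  qed
  have dj: "\<forall>j. j \<noteq> k \<longrightarrow> d j = 0"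
  proof (intro allI impI)
    fix j assume jk: "j \<noteq> k"
    consider "c0 < 0" | "c0 = 0" | "c0 > 0" by linarith
    then show "d j = 0"
    proof cases
      case 1
      show ?thesis
      proof (rule ccontr)
        assume "d j \<noteq> 0"
        then consider "d j > 0" | "d j < 0" by linarith
        then show False
        proof cases
          case a: 1
          then have "c = U j" using dpos by blast
          moreover have "c0 < U j" using sep jk 1 by blast
          ultimately show False using cc by simp
        next
          case a: 2
          then have "c = L j" using dneg by blast
          moreover have "c0 = U k" using ek 1 by blast
          moreover have "L j < U k" "L k < U j" using A1 by blast+
          ultimately show False using cc by linarith
        qed
      qed
    next
      case 3
      show ?thesis
      proof (rule ccontr)
        assume "d j \<noteq> 0"
        then consider "d j > 0" | "d j < 0" by linarith
        then show False
        proof cases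
          case a: 2
          then have "c = L j" using dneg by blast
          moreover have "L j < c0" using sep jk 3 by blast
          ultimately show False using cc by simp
        next
          case a: 1
          then have "c = U j" using dpos by blast
          moreover have "c0 = L k" using ek 3 by blast
          moreover have "L j < U k" "L k < U j" using A1 by blast+
          ultimately show False using cc by linarith
        qed
      qed
    next
      case 2
      have "sum d UNIV = 0" using csum cc 2 bp by simp
      have np: "\<not> (\<exists>i. d i > 0)"
      proof
        assume "\<exists>i. d i > 0"
        then obtain i where i: "d i > 0" by blast
        have "\<exists>l. d l < 0"
        proof (rule ccontr)
          assume "\<not> (\<exists>l. d l < 0)"
          then have "\<forall>l\<in>UNIV. 0 \<le> d l" by (auto simp: not_less)
          then have "d i = 0" using \<open>sum d UNIV = 0\<close> sum_nonneg_eq_0_iff[of UNIV d] by auto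
          then show False using i by simp
        qed
        then obtain l where "d l < 0" by blast
        then have "c = L l" using dneg by blast
        moreover have "c = U i" using i dpos by blast
        moreover have "L l < U i" using A1 by blast
        ultimately show False by linarith
      qed
      have nn: "\<not> (\<exists>i. d i < 0)"
      proof
        assume "\<exists>i. d i < 0"
        then obtain i where i: "d i < 0" by blast
        have "\<exists>l. d l > 0"
        proof (rule ccontr)
          assume "\<not> (\<exists>l. d l > 0)"
          then have "\<forall>l\<in>UNIV. 0 \<le> - d l" by (auto simp: not_less)
          then have "- d i = 0" using \<open>sum d UNIV = 0\<close> sum_nonneg_eq_0_iff[of UNIV "\<lambda>l. - d l"]
            by (auto simp: sum_negf)
          then show False using i by simp
        qed
        then show False using np by blast
      qed
      show ?thesis using np nn by (meson linorder_neqE_linordered_idom)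
    qed
  qed
  have "sum d UNIV = d k"
    using sum.remove[of UNIV k d] dj by simp
  then have "d k = - c0 / \<beta>" using csum cc bp by (simp add: field_simps)
  then show ?thesis using cc dj by auto
qed

lemma sat_decomp:
  assumes "\<bar>s\<bar> \<le> 1" "d > 0 \<Longrightarrow> s = 1" "d < 0 \<Longrightarrow> s = -1"
  shows "sat (s + d) = s" "dz (s + d) = d"
  using assms unfolding sat_def dz_def by (cases "d > 0"; cases "d < 0"; auto)+

lemma sat_props:
  shows "\<bar>sat v\<bar> \<le> 1" "dz v > 0 \<Longrightarrow> sat v = 1" "dz v < 0 \<Longrightarrow> sat v = -1"
    "v = sat v + dz v"
  unfolding sat_def dz_def by auto



lemma dz_cases:
  "dz v < 0 \<longleftrightarrow> v < -1" "v < -1 \<Longrightarrow> dz v = v + 1"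
  "dz v > 0 \<longleftrightarrow> v > 1" "v > 1 \<Longrightarrow> dz v = v - 1"
  "dz v = 0 \<longleftrightarrow> \<bar>v\<bar> \<le> 1"
  unfolding dz_def sat_def by auto

lemma choose:
  fixes m e :: "'n::finite \<Rightarrow> real"
  assumes epos: "\<forall>j. e j > 0"
    and A1: "\<forall>i j. (m i - 1) / e i < (m j + 1) / e j"
    and hk: "(\<forall>j. dz (m j) = 0) \<or>
       ((\<forall>j. \<bar>dz (m j) / e j\<bar> \<le> \<bar>dz (m k) / e k\<bar>) \<and>
        (\<forall>j. (\<forall>l. \<bar>dz (m l) / e l\<bar> \<le> \<bar>dz (m j) / e j\<bar>) \<longrightarrow> j = k))"
    and c0: "c0 = dz (m k) / e k"
  shows "\<forall>j. (m j - 1) / e j \<le> c0 \<and> c0 \<le> (m j + 1) / e j"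
    "\<forall>j. j \<noteq> k \<longrightarrow> (c0 < 0 \<longrightarrow> c0 < (m j + 1) / e j) \<and> (0 < c0 \<longrightarrow> (m j - 1) / e j < c0)"
    "(c0 < 0 \<longrightarrow> c0 = (m k + 1) / e k) \<and> (0 < c0 \<longrightarrow> c0 = (m k - 1) / e k)"
proof -
  have ek: "e k > 0" using epos by blast
  have "(\<forall>j. (m j - 1) / e j \<le> c0 \<and> c0 \<le> (m j + 1) / e j) \<and>
    (\<forall>j. j \<noteq> k \<longrightarrow> (c0 < 0 \<longrightarrow> c0 < (m j + 1) / e j) \<and> (0 < c0 \<longrightarrow> (m j - 1) / e j < c0)) \<and>
    ((c0 < 0 \<longrightarrow> c0 = (m k + 1) / e k) \<and> (0 < c0 \<longrightarrow> c0 = (m k - 1) / e k))"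
  proof (cases "\<forall>j. dz (m j) = 0")
    case True
    then have z: "c0 = 0" using c0 by simp
    have "\<forall>j. (m j - 1) / e j \<le> 0 \<and> 0 \<le> (m j + 1) / e j"
    proof
      fix j
      have "\<bar>m j\<bar> \<le> 1" using True dz_cases(5) by blast
      moreover have "e j > 0" using epos by blast
      ultimately show "(m j - 1) / e j \<le> 0 \<and> 0 \<le> (m j + 1) / e j"
        by (auto intro: divide_nonpos_pos divide_nonneg_pos)
    qed
    then show ?thesis using z by simp
  next
    case False
    then obtain i where i: "dz (m i) \<noteq> 0" by blast
    have amax: "\<forall>j. \<bar>dz (m j) / e j\<bar> \<le> \<bar>dz (m k) / e k\<bar>"
      and uq: "\<forall>j. (\<forall>l. \<bar>dz (m l) / e l\<bar> \<le> \<bar>dz (m j) / e j\<bar>) \<longrightarrow> j = k"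
      using hk False by blast+
    have ei: "e i > 0" using epos by blast
    have "\<bar>dz (m i) / e i\<bar> > 0" using i ei by simp
    then have akpos: "\<bar>dz (m k) / e k\<bar> > 0" using amax by (meson less_le_trans)
    have strict: "\<forall>j. j \<noteq> k \<longrightarrow> \<bar>dz (m j) / e j\<bar> < \<bar>dz (m k) / e k\<bar>"
    proof (intro allI impI)
      fix j assume jk: "j \<noteq> k"
      show "\<bar>dz (m j) / e j\<bar> < \<bar>dz (m k) / e k\<bar>"
      proof (rule ccontr)
        assume "\<not> ?thesis"
        then have "\<forall>l. \<bar>dz (m l) / e l\<bar> \<le> \<bar>dz (m j) / e j\<bar>" using amax by (meson not_less order_trans)
        then show False using uq jk by blast
      qed
    qed
    have absdiv: "\<And>j. \<bar>dz (m j) / e j\<bar> = \<bar>dz (m j)\<bar> / e j"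
      using epos by (simp add: abs_div_pos)
    consider "dz (m k) < 0" | "dz (m k) > 0" using akpos by fastforce
    then show ?thesis
    proof cases
      case 1
      then have mk: "m k < -1" using dz_cases(1) by blast
      then have c0U: "c0 = (m k + 1) / e k" using c0 dz_cases(2) by simp
      have c0neg: "c0 < 0" using c0U mk ek by (simp add: divide_neg_pos)
      have aK: "\<bar>dz (m k) / e k\<bar> = - c0" using c0 c0neg by (metis abs_of_neg)
      have lt: "\<forall>j. j \<noteq> k \<longrightarrow> c0 < (m j + 1) / e j"
      proof (intro allI impI)
        fix j assume jk: "j \<noteq> k"
        have ej: "e j > 0" using epos by blast
        show "c0 < (m j + 1) / e j"
        proof (cases "m j < -1")
          case True
          then have "dz (m j) = m j + 1" using dz_cases(2) by blast
          then have "\<bar>dz (m j) / e j\<bar> = - ((m j + 1) / e j)"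
            using True ej by (simp add: abs_div_pos field_simps)
          then show ?thesis using strict jk aK by auto
        next
          case False
          then have "(m j + 1) / e j \<ge> 0" using ej by simp
          then show ?thesis using c0neg by linarith
        qed
      qed
      have "\<forall>j. (m j - 1) / e j \<le> c0 \<and> c0 \<le> (m j + 1) / e j"
        using lt A1 c0U by (metis less_imp_le order_refl)
      then show ?thesis using lt c0U c0neg by auto
    next
      case 2
      then have mk: "m k > 1" using dz_cases(3) by blast
      then have c0L: "c0 = (m k - 1) / e k" using c0 dz_cases(4) by simp
      have c0pos: "c0 > 0" using c0L mk ek by simp
      have aK: "\<bar>dz (m k) / e k\<bar> = c0" using c0 c0pos by (metis abs_of_pos)
      have lt: "\<forall>j. j \<noteq> k \<longrightarrow> (m j - 1) / e j < c0"
      proof (intro allI impI)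
        fix j assume jk: "j \<noteq> k"
        have ej: "e j > 0" using epos by blast
        show "(m j - 1) / e j < c0"
        proof (cases "m j > 1")
          case True
          then have "dz (m j) = m j - 1" using dz_cases(4) by blast
          then have "\<bar>dz (m j) / e j\<bar> = (m j - 1) / e j"
            using True ej by (simp add: abs_div_pos)
          then show ?thesis using strict jk aK by auto
        next
          case False
          then have "(m j - 1) / e j \<le> 0" using ej by (simp add: divide_nonpos_pos)
          then show ?thesis using c0pos by linarith
        qed
      qed
      have "\<forall>j. (m j - 1) / e j \<le> c0 \<and> c0 \<le> (m j + 1) / e j"
        using lt A1 c0L by (metis less_imp_le order_refl)
      then show ?thesis using lt c0L c0pos by auto
    qed
  qed
  then show "\<forall>j. (m j - 1) / e j \<le> c0 \<and> c0 \<le> (m j + 1) / e j"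
    "\<forall>j. j \<noteq> k \<longrightarrow> (c0 < 0 \<longrightarrow> c0 < (m j + 1) / e j) \<and> (0 < c0 \<longrightarrow> (m j - 1) / e j < c0)"
    "(c0 < 0 \<longrightarrow> c0 = (m k + 1) / e k) \<and> (0 < c0 \<longrightarrow> c0 = (m k - 1) / e k)"
    by blast+
qed



lemma box_conv:
  fixes e :: real assumes "e > 0"
  shows "\<bar>c * e - m\<bar> \<le> 1 \<longleftrightarrow> ((m - 1) / e \<le> c \<and> c \<le> (m + 1) / e)"
  using assms by (auto simp: pos_divide_le_eq pos_le_divide_eq abs_le_iff)

lemma eqU_conv:
  fixes e :: real assumes "e > 0"
  shows "c * e - m = 1 \<longleftrightarrow> c = (m + 1) / e"
  using assms by (auto simp: field_simps)

lemma eqL_conv: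
  fixes e :: real assumes "e > 0"
  shows "c * e - m = -1 \<longleftrightarrow> c = (m - 1) / e"
  using assms by (auto simp: field_simps)

lemma mvneg: "A *v (- v) = - (A *v (v::real^'n)) " for A :: "real^'n^'m"
  by (simp add: vec_eq_iff matrix_vector_mult_def sum_negf)

lemma ones_mat_mult: "(ones_mat *v v) = (\<Sum>j\<in>UNIV. v $ j) *\<^sub>R (ones :: real^'n)"
  by (simp add: vec_eq_iff matrix_vector_mult_def ones_mat_def ones_def)

lemma diag_dom:
  fixes R :: "real^'n^'n"
  assumes "\<forall>i j. i \<noteq> j \<longrightarrow> R $ i $ j = 0" "\<forall>i. R $ i $ i > 0"
  shows "strictly_row_dominant R"
  using assms unfolding strictly_row_dominant_def by auto (metis less_irrefl)

theorem lemma2: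
  fixes B M P R :: "real^'n^'n" and \<beta> :: real and w :: "real^'n"
  assumes dom: "strictly_row_dominant B"
    and diag_pos: "\<forall>i. B $ i $ i > 0"
    and offdiag_neg: "\<forall>i j. i \<noteq> j \<longrightarrow> B $ i $ j < 0"
    and M_def: "M = matrix_inv B"
    and P_diag: "\<forall>i j. i \<noteq> j \<longrightarrow> P $ i $ j = 0" and P_pos: "\<forall>i. P $ i $ i > 0"
    and R_diag: "\<forall>i j. i \<noteq> j \<longrightarrow> R $ i $ j = 0" and R_pos: "\<forall>i. R $ i $ i > 0"
    and beta_pos: "\<beta> > 0"
    and A1: "Max (range (\<lambda>i. ((M *v w) $ i - 1) / (M *v ones) $ i))
             < Min (range (\<lambda>j. ((M *v w) $ j + 1) / (M *v ones) $ j))"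
    and A2: "dzv (M *v w) = 0 \<or>
             (\<exists>k. {i. \<forall>j. \<bar>dz ((M *v w) $ j) / (M *v ones) $ j\<bar>
                          \<le> \<bar>dz ((M *v w) $ i) / (M *v ones) $ i\<bar>} = {k})"
  shows "(\<exists>!p. is_equilibrium B P R \<beta> w (fst p) (snd p)) \<and>
         (\<forall>k. (dzv (M *v w) = 0 \<or>
               (\<forall>j. \<bar>dz ((M *v w) $ j) / (M *v ones) $ j\<bar>
                     \<le> \<bar>dz ((M *v w) $ k) / (M *v ones) $ k\<bar>)) \<longrightarrow>
            (let x0 = (dz ((M *v w) $ k) / (M *v ones) $ k) *\<^sub>R ones;
                 u0 = (\<chi> i. if i = k
                         then - sat ((M *v w) $ k) - dz ((M *v w) $ k) / (\<beta> * (M *v ones) $ k)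
                         else - (M *v w) $ i + ((M *v ones) $ i / (M *v ones) $ k) * dz ((M *v w) $ k));
                 z0 = - (matrix_inv R *v (u0 + P *v x0))
             in is_equilibrium B P R \<beta> w x0 z0))"
proof -
  have invB: "invertible B" using dom_invertible[OF dom] .
  have BM: "B ** M = mat 1" and MB: "M ** B = mat 1" using inv_props[OF invB] M_def by auto
  have invR: "invertible R" using dom_invertible[OF diag_dom[OF R_diag R_pos]] .
  have RR: "R ** matrix_inv R = mat 1" using inv_props[OF invR] by auto
  have Rinj: "\<And>a b. R *v a = R *v b \<Longrightarrow> a = b"
    using inj_matrix_vector_mult[OF invR] by (meson injD)
  define m where "m = M *v w"
  define e where "e = M *v ones"
  have Be: "B *v e = ones" unfolding e_def by (simp add: matrix_vector_mul_assoc BM)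
  have Bm: "B *v m = w" unfolding m_def by (simp add: matrix_vector_mul_assoc BM)
  have MBv: "\<And>v. M *v (B *v v) = v" by (simp add: matrix_vector_mul_assoc MB)
  have epos: "\<forall>j. e $ j > 0"
    using pos_sol[OF dom diag_pos offdiag_neg Be] by blast
  have A1': "\<forall>i j. (m $ i - 1) / e $ i < (m $ j + 1) / e $ j"
  proof (intro allI)
    fix i j
    have "(m $ i - 1) / e $ i \<le> Max (range (\<lambda>i. (m $ i - 1) / e $ i))" by (simp add: Max_ge)
    moreover have "Min (range (\<lambda>j. (m $ j + 1) / e $ j)) \<le> (m $ j + 1) / e $ j" by (simp add: Min_le)
    ultimately show "(m $ i - 1) / e $ i < (m $ j + 1) / e $ j"
      using A1 unfolding m_def[symmetric] e_def[symmetric] by linarith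
  qed
  define hk where "hk k \<longleftrightarrow> (\<forall>j. dz (m $ j) = 0) \<or>
       ((\<forall>j. \<bar>dz (m $ j) / e $ j\<bar> \<le> \<bar>dz (m $ k) / e $ k\<bar>) \<and>
        (\<forall>j. (\<forall>l. \<bar>dz (m $ l) / e $ l\<bar> \<le> \<bar>dz (m $ j) / e $ j\<bar>) \<longrightarrow> j = k))" for k
  define c0 where "c0 k = dz (m $ k) / e $ k" for k
  define d0 where "d0 k = (\<lambda>j. if j = k then - c0 k / \<beta> else 0)" for k
  define x0 where "x0 k = c0 k *\<^sub>R (ones :: real^'n)" for k
  define u0 where "u0 k = (\<chi> j. c0 k * e $ j - m $ j + d0 k j)" for k
  define z0 where "z0 k = - (matrix_inv R *v (u0 k + P *v x0 k))" for k
  have dzvz: "dzv m = 0 \<longleftrightarrow> (\<forall>j. dz (m $ j) = 0)" by (simp add: dzv_def vec_eq_iff)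
  have ch: "\<forall>j. (m $ j - 1) / e $ j \<le> c0 k \<and> c0 k \<le> (m $ j + 1) / e $ j"
    "\<forall>j. j \<noteq> k \<longrightarrow> (c0 k < 0 \<longrightarrow> c0 k < (m $ j + 1) / e $ j) \<and> (0 < c0 k \<longrightarrow> (m $ j - 1) / e $ j < c0 k)"
    "(c0 k < 0 \<longrightarrow> c0 k = (m $ k + 1) / e $ k) \<and> (0 < c0 k \<longrightarrow> c0 k = (m $ k - 1) / e $ k)"
    if "hk k" for k
    using choose[of "\<lambda>j. e $ j" "\<lambda>j. m $ j" k "c0 k"] epos A1' that
    unfolding hk_def c0_def by blast+
  have eqchar: "is_equilibrium B P R \<beta> w x z \<longleftrightarrow>
     (B *v satv (- (P *v x) - (R *v z)) = x - w \<and>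
      x = (- \<beta> * (\<Sum>j\<in>UNIV. dz ((- (P *v x) - (R *v z)) $ j))) *\<^sub>R ones)" for x z
    unfolding is_equilibrium_def Let_def ones_mat_mult
    by (auto simp: dzv_def algebra_simps eq_neg_iff_add_eq_0)
  have exist: "is_equilibrium B P R \<beta> w (x0 k) (z0 k)" if "hk k" for k
  proof -
    note c = ch[OF that]
    have Rz: "R *v z0 k = - (u0 k + P *v x0 k)"
      unfolding z0_def by (simp add: mvneg matrix_vector_mul_assoc RR)
    have u: "- (P *v x0 k) - (R *v z0 k) = u0 k" using Rz by simp
    have sd: "sat (c0 k * e $ j - m $ j + d0 k j) = c0 k * e $ j - m $ j \<and>
              dz (c0 k * e $ j - m $ j + d0 k j) = d0 k j" for j
    proof -
      have ej: "e $ j > 0" using epos by blast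
      have a: "\<bar>c0 k * e $ j - m $ j\<bar> \<le> 1" using c(1) box_conv[OF ej] by blast
      have b: "d0 k j > 0 \<Longrightarrow> c0 k * e $ j - m $ j = 1"
      proof -
        assume "d0 k j > 0"
        then have jk: "j = k" and "- c0 k / \<beta> > 0" unfolding d0_def by (auto split: if_splits)
        then have "c0 k < 0" using beta_pos by (simp add: divide_less_0_iff)
        then have "c0 k = (m $ k + 1) / e $ k" using c(3) by blast
        then have "c0 k * e $ k - m $ k = 1" using eqU_conv[of "e $ k" "c0 k" "m $ k"] epos by blast
        then show ?thesis using jk by simp
      qed
      have cc: "d0 k j < 0 \<Longrightarrow> c0 k * e $ j - m $ j = -1"
      proof -
        assume "d0 k j < 0"
        then have jk: "j = k" and "- c0 k / \<beta> < 0" unfolding d0_def by (auto split: if_splits)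
        then have "c0 k > 0" using beta_pos by (simp add: zero_less_divide_iff)
        then have "c0 k = (m $ k - 1) / e $ k" using c(3) by blast
        then have "c0 k * e $ k - m $ k = -1" using eqL_conv[of "e $ k" "c0 k" "m $ k"] epos by blast
        then show ?thesis using jk by simp
      qed
      show ?thesis using sat_decomp[OF a b cc] by simp
    qed
    have sv: "satv (u0 k) = c0 k *\<^sub>R e - m"
      unfolding satv_def u0_def by (simp add: vec_eq_iff sd)
    have dv: "(\<Sum>j\<in>UNIV. dz (u0 k $ j)) = - c0 k / \<beta>"
    proof -
      have "(\<Sum>j\<in>UNIV. dz (u0 k $ j)) = (\<Sum>j\<in>UNIV. d0 k j)"
        unfolding u0_def by (simp add: sd)
      also have "\<dots> = - c0 k / \<beta>" unfolding d0_def by simp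
      finally show ?thesis .
    qed
    show ?thesis unfolding eqchar u
      using beta_pos
      by (simp add: sv dv x0_def matrix_vector_mult_diff_distrib matrix_vector_mult_scaleR Be Bm)
  qed
  have uniq: "x = x0 k \<and> z = z0 k" if hk: "hk k" and eq: "is_equilibrium B P R \<beta> w x z" for k x z
  proof -
    note c = ch[OF hk]
    define u where "u = - (P *v x) - (R *v z)"
    define c where "c = - \<beta> * (\<Sum>j\<in>UNIV. dz (u $ j))"
    have e1: "B *v satv u = x - w" and xc: "x = c *\<^sub>R ones"
      using eq unfolding eqchar u_def[symmetric] c_def by auto
    have "satv u = M *v (x - w)" using e1 MBv by metis
    then have sv: "satv u = c *\<^sub>R e - m"
      unfolding xc e_def m_def by (simp add: matrix_vector_mult_diff_distrib matrix_vector_mult_scaleR)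
    then have svj: "sat (u $ j) = c * e $ j - m $ j" for j
      by (simp add: satv_def vec_eq_iff)
    have core: "c = c0 k \<and> (\<forall>j. dz (u $ j) = d0 k j)"
    proof -
      have r: "c = c0 k \<and> (\<forall>j. dz (u $ j) = (if j = k then - c0 k / \<beta> else 0))"
      proof (rule core_unique[where L = "\<lambda>j. (m $ j - 1) / e $ j" and U = "\<lambda>j. (m $ j + 1) / e $ j"])
        show "\<forall>j. (m $ j - 1) / e $ j \<le> c \<and> c \<le> (m $ j + 1) / e $ j"
        proof
          fix j have ej: "e $ j > 0" using epos by blast
          show "(m $ j - 1) / e $ j \<le> c \<and> c \<le> (m $ j + 1) / e $ j"
            using sat_props(1)[of "u $ j"] svj[of j] box_conv[OF ej] by simp
        qed
        show "\<forall>j. dz (u $ j) > 0 \<longrightarrow> c = (m $ j + 1) / e $ j"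
        proof (intro allI impI)
          fix j assume "dz (u $ j) > 0"
          then have "sat (u $ j) = 1" by (rule sat_props(2))
          moreover have ej: "e $ j > 0" using epos by blast
          ultimately show "c = (m $ j + 1) / e $ j" using svj[of j] eqU_conv[OF ej] by simp
        qed
        show "\<forall>j. dz (u $ j) < 0 \<longrightarrow> c = (m $ j - 1) / e $ j"
        proof (intro allI impI)
          fix j assume "dz (u $ j) < 0"
          then have "sat (u $ j) = -1" by (rule sat_props(3))
          moreover have ej: "e $ j > 0" using epos by blast
          ultimately show "c = (m $ j - 1) / e $ j" using svj[of j] eqL_conv[OF ej] by simp
        qed
        show "\<forall>i j. (m $ i - 1) / e $ i < (m $ j + 1) / e $ j" by (rule A1')
        show "c = - \<beta> * sum (\<lambda>j. dz (u $ j)) UNIV" by (rule c_def)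
      qed (use c beta_pos in auto)
      then show ?thesis unfolding d0_def by auto
    qed
    have ux: "u = u0 k"
    proof -
      have "u $ j = u0 k $ j" for j
      proof -
        have "u $ j = sat (u $ j) + dz (u $ j)" by (rule sat_props(4))
        also have "\<dots> = c0 k * e $ j - m $ j + d0 k j" using svj[of j] core by simp
        finally show ?thesis unfolding u0_def by simp
      qed
      then show ?thesis by (simp add: vec_eq_iff)
    qed
    have xx: "x = x0 k" using xc core unfolding x0_def by simp
    have "R *v z = R *v z0 k"
    proof -
      have "R *v z = - (u + P *v x)" unfolding u_def by simp
      moreover have "R *v z0 k = - (u0 k + P *v x0 k)"
        unfolding z0_def by (simp add: mvneg matrix_vector_mul_assoc RR)
      ultimately show ?thesis using ux xx by simp
    qed
    then show ?thesis using Rinj xx by blast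
  qed
  have formula: "(let x0 = (dz ((M *v w) $ k) / (M *v ones) $ k) *\<^sub>R ones;
                 u0 = (\<chi> i. if i = k
                         then - sat ((M *v w) $ k) - dz ((M *v w) $ k) / (\<beta> * (M *v ones) $ k)
                         else - (M *v w) $ i + ((M *v ones) $ i / (M *v ones) $ k) * dz ((M *v w) $ k));
                 z0 = - (matrix_inv R *v (u0 + P *v x0))
             in is_equilibrium B P R \<beta> w x0 z0) \<longleftrightarrow> is_equilibrium B P R \<beta> w (x0 k) (z0 k)" for k
  proof -
    have ek: "e $ k > 0" using epos by blast
    have "(\<chi> i. if i = k
                         then - sat ((M *v w) $ k) - dz ((M *v w) $ k) / (\<beta> * (M *v ones) $ k)
                         else - (M *v w) $ i + ((M *v ones) $ i / (M *v ones) $ k) * dz ((M *v w) $ k))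
          = u0 k"
      unfolding u0_def d0_def c0_def m_def[symmetric] e_def[symmetric] vec_eq_iff
      using ek beta_pos by (auto simp: dz_def field_simps)
    then show ?thesis unfolding Let_def x0_def z0_def c0_def m_def e_def by simp
  qed
  obtain k1 where hk1: "hk k1"
  proof (cases "\<forall>j. dz (m $ j) = 0")
    case True then show ?thesis using that unfolding hk_def by blast
  next
    case False
    then obtain k where "{i. \<forall>j. \<bar>dz (m $ j) / e $ j\<bar> \<le> \<bar>dz (m $ i) / e $ i\<bar>} = {k}"
      using A2 dzvz unfolding m_def e_def by auto
    then have "hk k" unfolding hk_def by (auto simp: set_eq_iff)
    then show ?thesis using that by blast
  qed
  have part1: "\<exists>!p. is_equilibrium B P R \<beta> w (fst p) (snd p)"
  proof (rule ex1I[of _ "(x0 k1, z0 k1)"])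
    show "is_equilibrium B P R \<beta> w (fst (x0 k1, z0 k1)) (snd (x0 k1, z0 k1))"
      using exist[OF hk1] by simp
    fix p assume "is_equilibrium B P R \<beta> w (fst p) (snd p)"
    then show "p = (x0 k1, z0 k1)" using uniq[OF hk1] by (cases p) auto
  qed
  have part2: "hk k" if "dzv (M *v w) = 0 \<or>
               (\<forall>j. \<bar>dz ((M *v w) $ j) / (M *v ones) $ j\<bar>
                     \<le> \<bar>dz ((M *v w) $ k) / (M *v ones) $ k\<bar>)" for k
  proof (cases "\<forall>j. dz (m $ j) = 0")
    case True then show ?thesis unfolding hk_def by blast
  next
    case False
    then obtain k' where k': "{i. \<forall>j. \<bar>dz (m $ j) / e $ j\<bar> \<le> \<bar>dz (m $ i) / e $ i\<bar>} = {k'}"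
      using A2 dzvz unfolding m_def e_def by auto
    have kin: "\<forall>j. \<bar>dz (m $ j) / e $ j\<bar> \<le> \<bar>dz (m $ k) / e $ k\<bar>"
      using that False dzvz unfolding m_def e_def by auto
    then have "k = k'" using k' by (auto simp: set_eq_iff)
    then show ?thesis using k' kin unfolding hk_def by (auto simp: set_eq_iff)
  qed
  show ?thesis using part1 part2 exist formula by blast
qed

end
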